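(* For every $\rho$-bialgebra $(X,a,c)$ of a higher-order GSOS law $\rho$ of $\Sigma$ over $B$, the underlying $\Sigma$-algebra $(X,a)$ is adequate: if $\llbracket-\rrbracket\colon\mu\Sigma\to X$ is the unique $\Sigma$-algebra morphism from the initial algebra and $\mathsf{beh}\colon\mu\Sigma\to\nu B(\mu\Sigma,-)$ is the unique $B(\mu\Sigma,-)$-coalgebra morphism from $(\mu\Sigma,\gamma)$ to the final $B(\mu\Sigma,-)$-coalgebra, then there exists a morphism $k\colon X\to\nu B(\mu\Sigma,-)$ in $\mathcal{C}$ with $k\cdot\llbracket-\rrbracket=\mathsf{beh}$.
   Context: Let $\mathcal{C}$ be a category with binary products and binary coproducts (pairing $\langle f,g\rangle$, copairing $[f,g]$, codiagonal $\nabla=[\mathrm{id},\mathrm{id}]$). Let $\Sigma\colon\mathcal{C}\to\mathcal{C}$ be an endofunctor with an initial algebra $(\mu\Sigma,\iota)$ and a free $\Sigma$-algebra $(\Sigma^\star X,\iota_X)$ with unit $\eta_X$ on every object $X$; for a $\Sigma$-algebra $(A,a)$ write $\hat a\colon\Sigma^\star A\to A$ for the unique algebra morphism with $\hat a\cdot\eta_A=\mathrm{id}_A$. Let $B\colon\mathcal{C}^{op}\times\mathcal{C}\to\mathcal{C}$ be a bifunctor such that for every object $X$ the endofunctor $B(X,-)$ has a final coalgebra, denoted $\nu B(X,-)$. A higher-order GSOS law is a family $\rho_{X,Y}\colon\Sigma(X\times B(X,Y))\to B(X,\Sigma^\star(X+Y))$ dinatural in $X$ and natural in $Y$. Its operational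 model is the unique $\gamma\colon\mu\Sigma\to B(\mu\Sigma,\mu\Sigma)$ with $\gamma\cdot\iota=B(\mathrm{id},\hat\iota\cdot\Sigma^\star\nabla)\cdot\rho_{\mu\Sigma,\mu\Sigma}\cdot\Sigma\langle\mathrm{id},\gamma\rangle$. A $\rho$-bialgebra is a triple $(X,a,c)$ with $a\colon\Sigma X\to X$, $c\colon X\to B(X,X)$ such that $c\cdot a=B(\mathrm{id},\hat a\cdot\Sigma^\star\nabla)\cdot\rho_{X,X}\cdot\Sigma\langle\mathrm{id},c\rangle$. *)

theory Defs
  imports Main
begin

section \<open>Categories (objects = all elements of type 'o, arrows = elements of 'm satisfying Arr)\<close>

record ('o,'m) cat =
  Arr :: "'m \<Rightarrow> bool"
  Dom :: "'m \<Rightarrow> 'o"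
  Cod :: "'m \<Rightarrow> 'o"
  Idm :: "'o \<Rightarrow> 'm"
  Cmp :: "'m \<Rightarrow> 'm \<Rightarrow> 'm"   (* Cmp C g f = g . f *)

definition hom :: "('o,'m) cat \<Rightarrow> 'o \<Rightarrow> 'o \<Rightarrow> 'm set" where
  "hom C X Y = {f. Arr C f \<and> Dom C f = X \<and> Cod C f = Y}"

definition category :: "('o,'m) cat \<Rightarrow> bool" where
  "category C \<longleftrightarrow>
     (\<forall>X. Idm C X \<in> hom C X X) \<and>
     (\<forall>f g X Y Z. f \<in> hom C X Y \<longrightarrow> g \<in> hom C Y Z \<longrightarrow> Cmp C g f \<in> hom C X Z) \<and>
     (\<forall>f X Y. f \<in> hom C X Y \<longrightarrow> Cmp C f (Idm C X) = f \<and> Cmp C (Idm C Y) f = f) \<and>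
     (\<forall>f g h W X Y Z. f \<in> hom C W X \<longrightarrow> g \<in> hom C X Y \<longrightarrow> h \<in> hom C Y Z \<longrightarrow>
        Cmp C h (Cmp C g f) = Cmp C (Cmp C h g) f)"

record ('o,'m) endo =
  FO :: "'o \<Rightarrow> 'o"
  FM :: "'m \<Rightarrow> 'm"

definition endofunctor :: "('o,'m) cat \<Rightarrow> ('o,'m) endo \<Rightarrow> bool" where
  "endofunctor C F \<longleftrightarrow>
     (\<forall>f X Y. f \<in> hom C X Y \<longrightarrow> FM F f \<in> hom C (FO F X) (FO F Y)) \<and>
     (\<forall>X. FM F (Idm C X) = Idm C (FO F X)) \<and>
     (\<forall>f g X Y Z. f \<in> hom C X Y \<longrightarrow> g \<in> hom C Y Z \<longrightarrow>
        FM F (Cmp C g f) = Cmp C (FM F g) (FM F f))"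

record ('o,'m) bif =
  BO :: "'o \<Rightarrow> 'o \<Rightarrow> 'o"
  BM :: "'m \<Rightarrow> 'm \<Rightarrow> 'm"

text \<open>Contravariant in the first, covariant in the second argument:
  for f : X' -> X and g : Y -> Y', BM f g : B(X,Y) -> B(X',Y').\<close>
definition bifunctor :: "('o,'m) cat \<Rightarrow> ('o,'m) bif \<Rightarrow> bool" where
  "bifunctor C B \<longleftrightarrow>
     (\<forall>f g X X' Y Y'. f \<in> hom C X' X \<longrightarrow> g \<in> hom C Y Y' \<longrightarrow>
        BM B f g \<in> hom C (BO B X Y) (BO B X' Y')) \<and>
     (\<forall>X Y. BM B (Idm C X) (Idm C Y) = Idm C (BO B X Y)) \<and>
     (\<forall>f f' g g' X X' X'' Y Y' Y''. f \<in> hom C X' X \<longrightarrow> f' \<in> hom C X'' X' \<longrightarrow>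
        g \<in> hom C Y Y' \<longrightarrow> g' \<in> hom C Y' Y'' \<longrightarrow>
        BM B (Cmp C f f') (Cmp C g' g) = Cmp C (BM B f' g') (BM B f g))"

record ('o,'m) prods =
  Pr :: "'o \<Rightarrow> 'o \<Rightarrow> 'o"
  P1 :: "'o \<Rightarrow> 'o \<Rightarrow> 'm"
  P2 :: "'o \<Rightarrow> 'o \<Rightarrow> 'm"
  Pair :: "'m \<Rightarrow> 'm \<Rightarrow> 'm"

definition binary_products :: "('o,'m) cat \<Rightarrow> ('o,'m) prods \<Rightarrow> bool" where
  "binary_products C P \<longleftrightarrow> (\<forall>X Y.
     P1 P X Y \<in> hom C (Pr P X Y) X \<and> P2 P X Y \<in> hom C (Pr P X Y) Y \<and>
     (\<forall>Z f g. f \<in> hom C Z X \<longrightarrow> g \<in> hom C Z Y \<longrightarrow>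
        Pair P f g \<in> hom C Z (Pr P X Y) \<and>
        Cmp C (P1 P X Y) (Pair P f g) = f \<and> Cmp C (P2 P X Y) (Pair P f g) = g \<and>
        (\<forall>h \<in> hom C Z (Pr P X Y). Cmp C (P1 P X Y) h = f \<and> Cmp C (P2 P X Y) h = g
            \<longrightarrow> h = Pair P f g)))"

record ('o,'m) coprods =
  Cp :: "'o \<Rightarrow> 'o \<Rightarrow> 'o"
  In1 :: "'o \<Rightarrow> 'o \<Rightarrow> 'm"
  In2 :: "'o \<Rightarrow> 'o \<Rightarrow> 'm"
  Copair :: "'m \<Rightarrow> 'm \<Rightarrow> 'm"

definition binary_coproducts :: "('o,'m) cat \<Rightarrow> ('o,'m) coprods \<Rightarrow> bool" where
  "binary_coproducts C Q \<longleftrightarrow> (\<forall>X Y.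
     In1 Q X Y \<in> hom C X (Cp Q X Y) \<and> In2 Q X Y \<in> hom C Y (Cp Q X Y) \<and>
     (\<forall>Z f g. f \<in> hom C X Z \<longrightarrow> g \<in> hom C Y Z \<longrightarrow>
        Copair Q f g \<in> hom C (Cp Q X Y) Z \<and>
        Cmp C (Copair Q f g) (In1 Q X Y) = f \<and> Cmp C (Copair Q f g) (In2 Q X Y) = g \<and>
        (\<forall>h \<in> hom C (Cp Q X Y) Z. Cmp C h (In1 Q X Y) = f \<and> Cmp C h (In2 Q X Y) = g
            \<longrightarrow> h = Copair Q f g)))"

definition prodm :: "('o,'m) cat \<Rightarrow> ('o,'m) prods \<Rightarrow> 'm \<Rightarrow> 'm \<Rightarrow> 'm" where
  "prodm C P f g = Pair P (Cmp C f (P1 P (Dom C f) (Dom C g))) (Cmp C g (P2 P (Dom C f) (Dom C g)))"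

definition coprodm :: "('o,'m) cat \<Rightarrow> ('o,'m) coprods \<Rightarrow> 'm \<Rightarrow> 'm \<Rightarrow> 'm" where
  "coprodm C Q f g = Copair Q (Cmp C (In1 Q (Cod C f) (Cod C g)) f) (Cmp C (In2 Q (Cod C f) (Cod C g)) g)"

definition codiag :: "('o,'m) cat \<Rightarrow> ('o,'m) coprods \<Rightarrow> 'o \<Rightarrow> 'm" where
  "codiag C Q X = Copair Q (Idm C X) (Idm C X)"

definition alg_hom :: "('o,'m) cat \<Rightarrow> ('o,'m) endo \<Rightarrow> 'o \<Rightarrow> 'm \<Rightarrow> 'o \<Rightarrow> 'm \<Rightarrow> 'm \<Rightarrow> bool" where
  "alg_hom C S A a A' a' h \<longleftrightarrow> h \<in> hom C A A' \<and> Cmp C h a = Cmp C a' (FM S h)"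

definition initial_alg :: "('o,'m) cat \<Rightarrow> ('o,'m) endo \<Rightarrow> 'o \<Rightarrow> 'm \<Rightarrow> bool" where
  "initial_alg C S mu i \<longleftrightarrow> i \<in> hom C (FO S mu) mu \<and>
     (\<forall>A a. a \<in> hom C (FO S A) A \<longrightarrow> (\<exists>!h. alg_hom C S mu i A a h))"

record ('o,'m) freealg =
  FT :: "'o \<Rightarrow> 'o"
  FI :: "'o \<Rightarrow> 'm"
  FE :: "'o \<Rightarrow> 'm"

definition free_algs :: "('o,'m) cat \<Rightarrow> ('o,'m) endo \<Rightarrow> ('o,'m) freealg \<Rightarrow> bool" where
  "free_algs C S F \<longleftrightarrow> (\<forall>X.
     FI F X \<in> hom C (FO S (FT F X)) (FT F X) \<and> FE F X \<in> hom C X (FT F X) \<and>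
     (\<forall>A a f. a \<in> hom C (FO S A) A \<longrightarrow> f \<in> hom C X A \<longrightarrow>
        (\<exists>!h. alg_hom C S (FT F X) (FI F X) A a h \<and> Cmp C h (FE F X) = f)))"

definition fext :: "('o,'m) cat \<Rightarrow> ('o,'m) endo \<Rightarrow> ('o,'m) freealg \<Rightarrow> 'o \<Rightarrow> 'o \<Rightarrow> 'm \<Rightarrow> 'm \<Rightarrow> 'm" where
  "fext C S F X A a f = (THE h. alg_hom C S (FT F X) (FI F X) A a h \<and> Cmp C h (FE F X) = f)"

definition hat :: "('o,'m) cat \<Rightarrow> ('o,'m) endo \<Rightarrow> ('o,'m) freealg \<Rightarrow> 'm \<Rightarrow> 'm" where
  "hat C S F a = fext C S F (Cod C a) (Cod C a) a (Idm C (Cod C a))"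

definition freemap :: "('o,'m) cat \<Rightarrow> ('o,'m) endo \<Rightarrow> ('o,'m) freealg \<Rightarrow> 'm \<Rightarrow> 'm" where
  "freemap C S F f = fext C S F (Dom C f) (FT F (Cod C f)) (FI F (Cod C f)) (Cmp C (FE F (Cod C f)) f)"

definition coalg_hom :: "('o,'m) cat \<Rightarrow> ('o,'m) bif \<Rightarrow> 'o \<Rightarrow> 'o \<Rightarrow> 'm \<Rightarrow> 'o \<Rightarrow> 'm \<Rightarrow> 'm \<Rightarrow> bool" where
  "coalg_hom C B X D d D' d' h \<longleftrightarrow> h \<in> hom C D D' \<and> Cmp C d' h = Cmp C (BM B (Idm C X) h) d"

definition final_coalgs :: "('o,'m) cat \<Rightarrow> ('o,'m) bif \<Rightarrow> ('o \<Rightarrow> 'o) \<Rightarrow> ('o \<Rightarrow> 'm) \<Rightarrow> bool" where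
  "final_coalgs C B nu tau \<longleftrightarrow> (\<forall>X.
     tau X \<in> hom C (nu X) (BO B X (nu X)) \<and>
     (\<forall>D d. d \<in> hom C D (BO B X D) \<longrightarrow> (\<exists>!h. coalg_hom C B X D d (nu X) (tau X) h)))"

definition ho_gsos_law :: "('o,'m) cat \<Rightarrow> ('o,'m) endo \<Rightarrow> ('o,'m) bif \<Rightarrow> ('o,'m) prods \<Rightarrow>
    ('o,'m) coprods \<Rightarrow> ('o,'m) freealg \<Rightarrow> ('o \<Rightarrow> 'o \<Rightarrow> 'm) \<Rightarrow> bool" where
  "ho_gsos_law C S B P Q F rho \<longleftrightarrow>
     (\<forall>X Y. rho X Y \<in> hom C (FO S (Pr P X (BO B X Y))) (BO B X (FT F (Cp Q X Y)))) \<and>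
     \<comment> \<open>dinaturality in X\<close>
     (\<forall>f X X' Y. f \<in> hom C X X' \<longrightarrow>
        Cmp C (BM B (Idm C X) (freemap C S F (coprodm C Q f (Idm C Y))))
          (Cmp C (rho X Y) (FM S (prodm C P (Idm C X) (BM B f (Idm C Y)))))
        = Cmp C (BM B f (Idm C (FT F (Cp Q X' Y))))
          (Cmp C (rho X' Y) (FM S (prodm C P f (Idm C (BO B X' Y)))))) \<and>
     \<comment> \<open>naturality in Y\<close>
     (\<forall>g X Y Y'. g \<in> hom C Y Y' \<longrightarrow>
        Cmp C (BM B (Idm C X) (freemap C S F (coprodm C Q (Idm C X) g))) (rho X Y)
        = Cmp C (rho X Y') (FM S (prodm C P (Idm C X) (BM B (Idm C X) g))))"

definition rho_bialgebra :: "('o,'m) cat \<Rightarrow> ('o,'m) endo \<Rightarrow> ('o,'m) bif \<Rightarrow> ('o,'m) prods \<Rightarrow>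
    ('o,'m) coprods \<Rightarrow> ('o,'m) freealg \<Rightarrow> ('o \<Rightarrow> 'o \<Rightarrow> 'm) \<Rightarrow> 'o \<Rightarrow> 'm \<Rightarrow> 'm \<Rightarrow> bool" where
  "rho_bialgebra C S B P Q F rho X a c \<longleftrightarrow>
     a \<in> hom C (FO S X) X \<and> c \<in> hom C X (BO B X X) \<and>
     Cmp C c a = Cmp C (BM B (Idm C X) (Cmp C (hat C S F a) (freemap C S F (codiag C Q X))))
                   (Cmp C (rho X X) (FM S (Pair P (Idm C X) c)))"

text \<open>The operational model gamma : mu Sigma -> B(mu Sigma, mu Sigma) (the unique such map;
  uniqueness follows from initiality, so we only require the defining equation).\<close>
definition op_model :: "('o,'m) cat \<Rightarrow> ('o,'m) endo \<Rightarrow> ('o,'m) bif \<Rightarrow> ('o,'m) prods \<Rightarrow>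
    ('o,'m) coprods \<Rightarrow> ('o,'m) freealg \<Rightarrow> ('o \<Rightarrow> 'o \<Rightarrow> 'm) \<Rightarrow> 'o \<Rightarrow> 'm \<Rightarrow> 'm \<Rightarrow> bool" where
  "op_model C S B P Q F rho mu i gamma \<longleftrightarrow> rho_bialgebra C S B P Q F rho mu i gamma"

end

theory Submission imports Defs begin

locale setting =
  fixes C :: "('o,'m) cat" and S :: "('o,'m) endo" and B :: "('o,'m) bif"
    and P :: "('o,'m) prods" and Q :: "('o,'m) coprods" and F :: "('o,'m) freealg"
  assumes cat: "category C" and endo: "endofunctor C S" and bif: "bifunctor C B"
    and prods: "binary_products C P" and coprods: "binary_coproducts C Q"
    and free: "free_algs C S F"
begin

abbreviation cc (infixr "\<odot>" 55) where "g \<odot> f \<equiv> Cmp C g f"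

lemma cat_ax:
  "Idm C X \<in> hom C X X"
  "f \<in> hom C X Y \<Longrightarrow> g \<in> hom C Y Z \<Longrightarrow> Cmp C g f \<in> hom C X Z"
  "f \<in> hom C X Y \<Longrightarrow> Cmp C f (Idm C X) = f"
  "f \<in> hom C X Y \<Longrightarrow> Cmp C (Idm C Y) f = f"
  "f \<in> hom C W X \<Longrightarrow> g \<in> hom C X Y \<Longrightarrow> h \<in> hom C Y Z \<Longrightarrow> Cmp C h (Cmp C g f) = Cmp C (Cmp C h g) f"
proof -
  note ax = cat[unfolded category_def]
  show "Idm C X \<in> hom C X X" using ax[THEN conjunct1] by blast
  show "f \<in> hom C X Y \<Longrightarrow> g \<in> hom C Y Z \<Longrightarrow> Cmp C g f \<in> hom C X Z"
    using ax[THEN conjunct2, THEN conjunct1, rule_format, of f X Y g Z] by blast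
  show "f \<in> hom C X Y \<Longrightarrow> Cmp C f (Idm C X) = f"
    using ax[THEN conjunct2, THEN conjunct2, THEN conjunct1, rule_format, of f X Y] by blast
  show "f \<in> hom C X Y \<Longrightarrow> Cmp C (Idm C Y) f = f"
    using ax[THEN conjunct2, THEN conjunct2, THEN conjunct1, rule_format, of f X Y] by blast
  show "f \<in> hom C W X \<Longrightarrow> g \<in> hom C X Y \<Longrightarrow> h \<in> hom C Y Z \<Longrightarrow> Cmp C h (Cmp C g f) = Cmp C (Cmp C h g) f"
    using ax[THEN conjunct2, THEN conjunct2, THEN conjunct2, rule_format, of f W X g Y h Z] by blast
qed

lemma comp_typ:
  assumes "Arr C f" "Arr C g" "Cod C f = Dom C g"
  shows "Arr C (g \<odot> f) \<and> Dom C (g \<odot> f) = Dom C f \<and> Cod C (g \<odot> f) = Cod C g"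
  using cat_ax(2)[of f "Dom C f" "Cod C f" g "Cod C g"] assms unfolding hom_def by simp

lemma arr_comp[simp]: "Arr C f \<Longrightarrow> Arr C g \<Longrightarrow> Cod C f = Dom C g \<Longrightarrow> Arr C (g \<odot> f)"
  using comp_typ by blast
lemma dom_comp[simp]: "Arr C f \<Longrightarrow> Arr C g \<Longrightarrow> Cod C f = Dom C g \<Longrightarrow> Dom C (g \<odot> f) = Dom C f"
  using comp_typ by blast
lemma cod_comp[simp]: "Arr C f \<Longrightarrow> Arr C g \<Longrightarrow> Cod C f = Dom C g \<Longrightarrow> Cod C (g \<odot> f) = Cod C g"
  using comp_typ by blast

lemma assoc[simp]: "Arr C f \<Longrightarrow> Arr C g \<Longrightarrow> Arr C h \<Longrightarrow> Cod C f = Dom C g \<Longrightarrow> Cod C g = Dom C h \<Longrightarrow>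
   (h \<odot> g) \<odot> f = h \<odot> (g \<odot> f)"
  using cat_ax(5)[of f "Dom C f" "Cod C f" g "Cod C g" h "Cod C h"] unfolding hom_def by simp

lemma idm_typ[simp]: "Arr C (Idm C X)" "Dom C (Idm C X) = X" "Cod C (Idm C X) = X"
  using cat_ax(1)[of X] unfolding hom_def by simp_all

lemma idm_r[simp]: "Arr C f \<Longrightarrow> Dom C f = X \<Longrightarrow> f \<odot> Idm C X = f"
  using cat_ax(3)[of f X "Cod C f"] unfolding hom_def by simp
lemma idm_l[simp]: "Arr C f \<Longrightarrow> Cod C f = X \<Longrightarrow> Idm C X \<odot> f = f"
  using cat_ax(4)[of f "Dom C f" X] unfolding hom_def by simp

lemma FM_typ[simp]: "Arr C f \<Longrightarrow> Arr C (FM S f)" "Arr C f \<Longrightarrow> Dom C (FM S f) = FO S (Dom C f)"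
  "Arr C f \<Longrightarrow> Cod C (FM S f) = FO S (Cod C f)"
  using endo[unfolded endofunctor_def, THEN conjunct1, rule_format, of f "Dom C f" "Cod C f"]
  unfolding hom_def by simp_all
lemma FM_id[simp]: "FM S (Idm C X) = Idm C (FO S X)"
  using endo[unfolded endofunctor_def, THEN conjunct2, THEN conjunct1, rule_format, of X] .
lemma FM_comp: "Arr C f \<Longrightarrow> Arr C g \<Longrightarrow> Cod C f = Dom C g \<Longrightarrow> FM S (g \<odot> f) = FM S g \<odot> FM S f"
  using endo[unfolded endofunctor_def, THEN conjunct2, THEN conjunct2, rule_format, of f "Dom C f" "Cod C f" g "Cod C g"]
  unfolding hom_def by simp

lemma BM_typ[simp]: "Arr C f \<Longrightarrow> Arr C g \<Longrightarrow> Arr C (BM B f g)"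
  "Arr C f \<Longrightarrow> Arr C g \<Longrightarrow> Dom C (BM B f g) = BO B (Cod C f) (Dom C g)"
  "Arr C f \<Longrightarrow> Arr C g \<Longrightarrow> Cod C (BM B f g) = BO B (Dom C f) (Cod C g)"
  using bif[unfolded bifunctor_def, THEN conjunct1, rule_format, of f "Dom C f" "Cod C f" g "Dom C g" "Cod C g"]
  unfolding hom_def by simp_all
lemma BM_id[simp]: "BM B (Idm C X) (Idm C Y) = Idm C (BO B X Y)"
  using bif[unfolded bifunctor_def, THEN conjunct2, THEN conjunct1, rule_format, of X Y] .
lemma BM_comp: "Arr C f \<Longrightarrow> Arr C f' \<Longrightarrow> Arr C g \<Longrightarrow> Arr C g' \<Longrightarrow> Dom C f = Cod C f' \<Longrightarrow>
   Cod C g = Dom C g' \<Longrightarrow> BM B (f \<odot> f') (g' \<odot> g) = BM B f' g' \<odot> BM B f g"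
  using bif[unfolded bifunctor_def, THEN conjunct2, THEN conjunct2, rule_format,
     of f "Dom C f" "Cod C f" f' "Dom C f'" g "Dom C g" "Cod C g" g' "Cod C g'"]
  unfolding hom_def by simp

lemma prod_ax: "P1 P X Y \<in> hom C (Pr P X Y) X" "P2 P X Y \<in> hom C (Pr P X Y) Y"
  "f \<in> hom C Z X \<Longrightarrow> g \<in> hom C Z Y \<Longrightarrow> Pair P f g \<in> hom C Z (Pr P X Y)"
  "f \<in> hom C Z X \<Longrightarrow> g \<in> hom C Z Y \<Longrightarrow> P1 P X Y \<odot> Pair P f g = f"
  "f \<in> hom C Z X \<Longrightarrow> g \<in> hom C Z Y \<Longrightarrow> P2 P X Y \<odot> Pair P f g = g"
  "f \<in> hom C Z X \<Longrightarrow> g \<in> hom C Z Y \<Longrightarrow> h \<in> hom C Z (Pr P X Y) \<Longrightarrow> P1 P X Y \<odot> h = f \<Longrightarrow> P2 P X Y \<odot> h = g \<Longrightarrow> h = Pair P f g"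
proof -
  note ax = prods[unfolded binary_products_def, rule_format, of X Y]
  show "P1 P X Y \<in> hom C (Pr P X Y) X" using ax by blast
  show "P2 P X Y \<in> hom C (Pr P X Y) Y" using ax by blast
  note ax2 = ax[THEN conjunct2, THEN conjunct2, rule_format, of f Z g]
  show "f \<in> hom C Z X \<Longrightarrow> g \<in> hom C Z Y \<Longrightarrow> Pair P f g \<in> hom C Z (Pr P X Y)" using ax2 by blast
  show "f \<in> hom C Z X \<Longrightarrow> g \<in> hom C Z Y \<Longrightarrow> P1 P X Y \<odot> Pair P f g = f" using ax2 by blast
  show "f \<in> hom C Z X \<Longrightarrow> g \<in> hom C Z Y \<Longrightarrow> P2 P X Y \<odot> Pair P f g = g" using ax2 by blast
  show "f \<in> hom C Z X \<Longrightarrow> g \<in> hom C Z Y \<Longrightarrow> h \<in> hom C Z (Pr P X Y) \<Longrightarrow> P1 P X Y \<odot> h = f \<Longrightarrow> P2 P X Y \<odot> h = g \<Longrightarrow> h = Pair P f g"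
  proof -
    assume a: "f \<in> hom C Z X" "g \<in> hom C Z Y" "h \<in> hom C Z (Pr P X Y)" "P1 P X Y \<odot> h = f" "P2 P X Y \<odot> h = g"
    have "\<forall>h \<in> hom C Z (Pr P X Y). P1 P X Y \<odot> h = f \<and> P2 P X Y \<odot> h = g \<longrightarrow> h = Pair P f g"
      using ax2[OF a(1,2)] by blast
    thus ?thesis using a(3,4,5) by blast
  qed
qed

lemma P_typ[simp]: "Arr C (P1 P X Y)" "Dom C (P1 P X Y) = Pr P X Y" "Cod C (P1 P X Y) = X"
  "Arr C (P2 P X Y)" "Dom C (P2 P X Y) = Pr P X Y" "Cod C (P2 P X Y) = Y"
  using prod_ax(1,2)[of X Y] unfolding hom_def by simp_all
lemma Pair_typ[simp]: "Arr C f \<Longrightarrow> Arr C g \<Longrightarrow> Dom C f = Dom C g \<Longrightarrow> Arr C (Pair P f g)"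
  "Arr C f \<Longrightarrow> Arr C g \<Longrightarrow> Dom C f = Dom C g \<Longrightarrow> Dom C (Pair P f g) = Dom C f"
  "Arr C f \<Longrightarrow> Arr C g \<Longrightarrow> Dom C f = Dom C g \<Longrightarrow> Cod C (Pair P f g) = Pr P (Cod C f) (Cod C g)"
  using prod_ax(3)[of f "Dom C f" "Cod C f" g "Cod C g"] unfolding hom_def by simp_all
lemma P1_Pair[simp]: "Arr C f \<Longrightarrow> Arr C g \<Longrightarrow> Dom C f = Dom C g \<Longrightarrow> Cod C f = X \<Longrightarrow> Cod C g = Y \<Longrightarrow>
   P1 P X Y \<odot> Pair P f g = f"
  using prod_ax(4)[of f "Dom C f" X g Y] unfolding hom_def by simp
lemma P2_Pair[simp]: "Arr C f \<Longrightarrow> Arr C g \<Longrightarrow> Dom C f = Dom C g \<Longrightarrow> Cod C f = X \<Longrightarrow> Cod C g = Y \<Longrightarrow>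
   P2 P X Y \<odot> Pair P f g = g"
  using prod_ax(5)[of f "Dom C f" X g Y] unfolding hom_def by simp
lemma Pair_uniq: "Arr C h \<Longrightarrow> Cod C h = Pr P X Y \<Longrightarrow> Arr C f \<Longrightarrow> Arr C g \<Longrightarrow> Dom C f = Dom C h \<Longrightarrow> Dom C g = Dom C h
  \<Longrightarrow> Cod C f = X \<Longrightarrow> Cod C g = Y \<Longrightarrow> P1 P X Y \<odot> h = f \<Longrightarrow> P2 P X Y \<odot> h = g \<Longrightarrow> h = Pair P f g"
proof -
  assume a: "Arr C h" "Cod C h = Pr P X Y" "Arr C f" "Arr C g" "Dom C f = Dom C h" "Dom C g = Dom C h"
    "Cod C f = X" "Cod C g = Y" "P1 P X Y \<odot> h = f" "P2 P X Y \<odot> h = g"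
  have "f \<in> hom C (Dom C h) X" "g \<in> hom C (Dom C h) Y" "h \<in> hom C (Dom C h) (Pr P X Y)"
    unfolding hom_def using a(1-8) by blast+
  thus ?thesis using prod_ax(6) a(9,10) by blast
qed
lemma Pair_comp: "Arr C f \<Longrightarrow> Arr C g \<Longrightarrow> Dom C f = Dom C g \<Longrightarrow> Arr C h \<Longrightarrow> Cod C h = Dom C f \<Longrightarrow>
   Pair P f g \<odot> h = Pair P (f \<odot> h) (g \<odot> h)"
  by (rule Pair_uniq[where X="Cod C f" and Y="Cod C g"]) (simp_all flip: assoc)

lemma coprod_ax: "In1 Q X Y \<in> hom C X (Cp Q X Y)" "In2 Q X Y \<in> hom C Y (Cp Q X Y)"
  "f \<in> hom C X Z \<Longrightarrow> g \<in> hom C Y Z \<Longrightarrow> Copair Q f g \<in> hom C (Cp Q X Y) Z"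
  "f \<in> hom C X Z \<Longrightarrow> g \<in> hom C Y Z \<Longrightarrow> Copair Q f g \<odot> In1 Q X Y = f"
  "f \<in> hom C X Z \<Longrightarrow> g \<in> hom C Y Z \<Longrightarrow> Copair Q f g \<odot> In2 Q X Y = g"
  "f \<in> hom C X Z \<Longrightarrow> g \<in> hom C Y Z \<Longrightarrow> h \<in> hom C (Cp Q X Y) Z \<Longrightarrow> h \<odot> In1 Q X Y = f \<Longrightarrow> h \<odot> In2 Q X Y = g \<Longrightarrow> h = Copair Q f g"
proof -
  note ax = coprods[unfolded binary_coproducts_def, rule_format, of X Y]
  show "In1 Q X Y \<in> hom C X (Cp Q X Y)" using ax by blast
  show "In2 Q X Y \<in> hom C Y (Cp Q X Y)" using ax by blast
  note ax2 = ax[THEN conjunct2, THEN conjunct2, rule_format, of f Z g]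
  show "f \<in> hom C X Z \<Longrightarrow> g \<in> hom C Y Z \<Longrightarrow> Copair Q f g \<in> hom C (Cp Q X Y) Z" using ax2 by blast
  show "f \<in> hom C X Z \<Longrightarrow> g \<in> hom C Y Z \<Longrightarrow> Copair Q f g \<odot> In1 Q X Y = f" using ax2 by blast
  show "f \<in> hom C X Z \<Longrightarrow> g \<in> hom C Y Z \<Longrightarrow> Copair Q f g \<odot> In2 Q X Y = g" using ax2 by blast
  show "f \<in> hom C X Z \<Longrightarrow> g \<in> hom C Y Z \<Longrightarrow> h \<in> hom C (Cp Q X Y) Z \<Longrightarrow> h \<odot> In1 Q X Y = f \<Longrightarrow> h \<odot> In2 Q X Y = g \<Longrightarrow> h = Copair Q f g"
  proof -
    assume a: "f \<in> hom C X Z" "g \<in> hom C Y Z" "h \<in> hom C (Cp Q X Y) Z" "h \<odot> In1 Q X Y = f" "h \<odot> In2 Q X Y = g"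
    have "\<forall>h \<in> hom C (Cp Q X Y) Z. h \<odot> In1 Q X Y = f \<and> h \<odot> In2 Q X Y = g \<longrightarrow> h = Copair Q f g"
      using ax2[OF a(1,2)] by blast
    thus ?thesis using a(3,4,5) by blast
  qed
qed

lemma In_typ[simp]: "Arr C (In1 Q X Y)" "Dom C (In1 Q X Y) = X" "Cod C (In1 Q X Y) = Cp Q X Y"
  "Arr C (In2 Q X Y)" "Dom C (In2 Q X Y) = Y" "Cod C (In2 Q X Y) = Cp Q X Y"
  using coprod_ax(1,2)[of X Y] unfolding hom_def by simp_all
lemma Copair_typ[simp]: "Arr C f \<Longrightarrow> Arr C g \<Longrightarrow> Cod C f = Cod C g \<Longrightarrow> Arr C (Copair Q f g)"
  "Arr C f \<Longrightarrow> Arr C g \<Longrightarrow> Cod C f = Cod C g \<Longrightarrow> Cod C (Copair Q f g) = Cod C f"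
  "Arr C f \<Longrightarrow> Arr C g \<Longrightarrow> Cod C f = Cod C g \<Longrightarrow> Dom C (Copair Q f g) = Cp Q (Dom C f) (Dom C g)"
  using coprod_ax(3)[of f "Dom C f" "Cod C f" g "Dom C g"] unfolding hom_def by simp_all
lemma Copair_In1[simp]: "Arr C f \<Longrightarrow> Arr C g \<Longrightarrow> Cod C f = Cod C g \<Longrightarrow> Dom C f = X \<Longrightarrow> Dom C g = Y \<Longrightarrow>
   Copair Q f g \<odot> In1 Q X Y = f"
  using coprod_ax(4)[of f X "Cod C f" g Y] unfolding hom_def by simp
lemma Copair_In2[simp]: "Arr C f \<Longrightarrow> Arr C g \<Longrightarrow> Cod C f = Cod C g \<Longrightarrow> Dom C f = X \<Longrightarrow> Dom C g = Y \<Longrightarrow>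
   Copair Q f g \<odot> In2 Q X Y = g"
  using coprod_ax(5)[of f X "Cod C f" g Y] unfolding hom_def by simp
lemma Copair_uniq: "Arr C h \<Longrightarrow> Dom C h = Cp Q X Y \<Longrightarrow> Arr C f \<Longrightarrow> Arr C g \<Longrightarrow> Cod C f = Cod C h \<Longrightarrow> Cod C g = Cod C h
  \<Longrightarrow> Dom C f = X \<Longrightarrow> Dom C g = Y \<Longrightarrow> h \<odot> In1 Q X Y = f \<Longrightarrow> h \<odot> In2 Q X Y = g \<Longrightarrow> h = Copair Q f g"
proof -
  assume a: "Arr C h" "Dom C h = Cp Q X Y" "Arr C f" "Arr C g" "Cod C f = Cod C h" "Cod C g = Cod C h"
    "Dom C f = X" "Dom C g = Y" "h \<odot> In1 Q X Y = f" "h \<odot> In2 Q X Y = g"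
  have "f \<in> hom C X (Cod C h)" "g \<in> hom C Y (Cod C h)" "h \<in> hom C (Cp Q X Y) (Cod C h)"
    unfolding hom_def using a(1-8) by blast+
  thus ?thesis using coprod_ax(6) a(9,10) by blast
qed
lemma copair_ext:
  assumes "Arr C h" "Dom C h = Cp Q X Y" "Arr C h'" "Dom C h' = Cp Q X Y" "Cod C h = Cod C h'"
   "h \<odot> In1 Q X Y = h' \<odot> In1 Q X Y" "h \<odot> In2 Q X Y = h' \<odot> In2 Q X Y"
  shows "h = h'"
proof -
  have 1: "h = Copair Q (h \<odot> In1 Q X Y) (h \<odot> In2 Q X Y)"
    by (rule Copair_uniq[where X=X and Y=Y]) (use assms(1,2) in simp_all)
  have 2: "h' = Copair Q (h' \<odot> In1 Q X Y) (h' \<odot> In2 Q X Y)"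
    by (rule Copair_uniq[where X=X and Y=Y]) (use assms(3,4) in simp_all)
  show ?thesis using 1 2 assms(6,7) by simp
qed

lemma F_typ[simp]: "Arr C (FI F X)" "Dom C (FI F X) = FO S (FT F X)" "Cod C (FI F X) = FT F X"
  "Arr C (FE F X)" "Dom C (FE F X) = X" "Cod C (FE F X) = FT F X"
proof -
  note ax = free[unfolded free_algs_def, rule_format, of X]
  have "FI F X \<in> hom C (FO S (FT F X)) (FT F X)" "FE F X \<in> hom C X (FT F X)" using ax by blast+
  thus "Arr C (FI F X)" "Dom C (FI F X) = FO S (FT F X)" "Cod C (FI F X) = FT F X"
  "Arr C (FE F X)" "Dom C (FE F X) = X" "Cod C (FE F X) = FT F X" unfolding hom_def by simp_all
qed

lemma fext:
  assumes "a \<in> hom C (FO S A) A" "f \<in> hom C X A"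
  shows "alg_hom C S (FT F X) (FI F X) A a (fext C S F X A a f) \<and> fext C S F X A a f \<odot> FE F X = f"
proof -
  have "\<exists>!h. alg_hom C S (FT F X) (FI F X) A a h \<and> h \<odot> FE F X = f"
    by (rule free[unfolded free_algs_def, rule_format, of X, THEN conjunct2, THEN conjunct2, rule_format, OF assms])
  thus ?thesis unfolding fext_def by (rule theI')
qed

lemma free_uniq:
  assumes "a \<in> hom C (FO S A) A" "alg_hom C S (FT F X) (FI F X) A a h" "alg_hom C S (FT F X) (FI F X) A a h'"
   "h \<odot> FE F X = h' \<odot> FE F X"
  shows "h = h'"
proof -
  have th: "Arr C h" "Dom C h = FT F X" "Cod C h = A" using assms(2) unfolding alg_hom_def hom_def by auto
  have hh: "h \<odot> FE F X \<in> hom C X A" using th unfolding hom_def by simp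
  have ex: "\<exists>!h0. alg_hom C S (FT F X) (FI F X) A a h0 \<and> h0 \<odot> FE F X = h \<odot> FE F X"
    by (rule free[unfolded free_algs_def, rule_format, of X, THEN conjunct2, THEN conjunct2, rule_format, OF assms(1) hh])
  have e1: "(THE h0. alg_hom C S (FT F X) (FI F X) A a h0 \<and> h0 \<odot> FE F X = h \<odot> FE F X) = h"
    by (rule the1_equality[OF ex]) (rule conjI[OF assms(2) refl])
  have e2: "(THE h0. alg_hom C S (FT F X) (FI F X) A a h0 \<and> h0 \<odot> FE F X = h \<odot> FE F X) = h'"
    by (rule the1_equality[OF ex]) (rule conjI[OF assms(3) assms(4)[symmetric]])
  show ?thesis using e1 e2 by (rule subst)
qed

lemma hat:
  assumes "Arr C a" "Dom C a = FO S (Cod C a)"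
  shows "alg_hom C S (FT F (Cod C a)) (FI F (Cod C a)) (Cod C a) a (hat C S F a)"
    "hat C S F a \<odot> FE F (Cod C a) = Idm C (Cod C a)"
proof -
  have 1: "a \<in> hom C (FO S (Cod C a)) (Cod C a)" "Idm C (Cod C a) \<in> hom C (Cod C a) (Cod C a)"
    using assms unfolding hom_def by simp_all
  show "alg_hom C S (FT F (Cod C a)) (FI F (Cod C a)) (Cod C a) a (hat C S F a)"
    "hat C S F a \<odot> FE F (Cod C a) = Idm C (Cod C a)"
    using fext[OF 1] unfolding hat_def by simp_all
qed

lemma hat_typ[simp]: "Arr C a \<Longrightarrow> Dom C a = FO S (Cod C a) \<Longrightarrow> Arr C (hat C S F a)"
  "Arr C a \<Longrightarrow> Dom C a = FO S (Cod C a) \<Longrightarrow> Dom C (hat C S F a) = FT F (Cod C a)"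
  "Arr C a \<Longrightarrow> Dom C a = FO S (Cod C a) \<Longrightarrow> Cod C (hat C S F a) = Cod C a"
  using hat(1) unfolding alg_hom_def hom_def by blast+

lemma freemap:
  assumes "Arr C f"
  shows "alg_hom C S (FT F (Dom C f)) (FI F (Dom C f)) (FT F (Cod C f)) (FI F (Cod C f)) (freemap C S F f)"
    "freemap C S F f \<odot> FE F (Dom C f) = FE F (Cod C f) \<odot> f"
proof -
  have 1: "FI F (Cod C f) \<in> hom C (FO S (FT F (Cod C f))) (FT F (Cod C f))"
     "FE F (Cod C f) \<odot> f \<in> hom C (Dom C f) (FT F (Cod C f))"
    using assms unfolding hom_def by simp_all
  show "alg_hom C S (FT F (Dom C f)) (FI F (Dom C f)) (FT F (Cod C f)) (FI F (Cod C f)) (freemap C S F f)"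
    "freemap C S F f \<odot> FE F (Dom C f) = FE F (Cod C f) \<odot> f"
    using fext[OF 1] unfolding freemap_def by simp_all
qed

lemma freemap_typ[simp]: "Arr C f \<Longrightarrow> Arr C (freemap C S F f)"
  "Arr C f \<Longrightarrow> Dom C (freemap C S F f) = FT F (Dom C f)"
  "Arr C f \<Longrightarrow> Cod C (freemap C S F f) = FT F (Cod C f)"
  using freemap(1) unfolding alg_hom_def hom_def by blast+

lemma alg_hom_comp:
  assumes "alg_hom C S A a A' a' h" "alg_hom C S A' a' A'' a'' k"
    "a \<in> hom C (FO S A) A" "a' \<in> hom C (FO S A') A'" "a'' \<in> hom C (FO S A'') A''"
  shows "alg_hom C S A a A'' a'' (k \<odot> h)"
proof -
  have t: "Arr C h" "Dom C h = A" "Cod C h = A'" "Arr C k" "Dom C k = A'" "Cod C k = A''"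
    "Arr C a" "Dom C a = FO S A" "Cod C a = A" "Arr C a'" "Dom C a' = FO S A'" "Cod C a' = A'"
    "Arr C a''" "Dom C a'' = FO S A''" "Cod C a'' = A''"
    using assms unfolding alg_hom_def hom_def by auto
  have "(k \<odot> h) \<odot> a = k \<odot> (h \<odot> a)" using t by simp
  also have "\<dots> = k \<odot> (a' \<odot> FM S h)" using assms(1) unfolding alg_hom_def by simp
  also have "\<dots> = (k \<odot> a') \<odot> FM S h" using t by simp
  also have "\<dots> = (a'' \<odot> FM S k) \<odot> FM S h" using assms(2) unfolding alg_hom_def by simp
  also have "\<dots> = a'' \<odot> FM S (k \<odot> h)" using t by (simp add: FM_comp)
  finally show ?thesis using t unfolding alg_hom_def hom_def by simp
qed

lemma prim_rec_unique:
  assumes init: "initial_alg C S mu i" and G: "G \<in> hom C (FO S (Pr P mu D)) D"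
    and f: "f \<in> hom C mu D" and f': "f' \<in> hom C mu D"
    and ef: "f \<odot> i = G \<odot> FM S (Pair P (Idm C mu) f)"
    and ef': "f' \<odot> i = G \<odot> FM S (Pair P (Idm C mu) f')"
  shows "f = f'"
proof -
  have ti: "Arr C i" "Dom C i = FO S mu" "Cod C i = mu" using init unfolding initial_alg_def hom_def by auto
  have tG: "Arr C G" "Dom C G = FO S (Pr P mu D)" "Cod C G = D" using G unfolding hom_def by auto
  define g where "g = Pair P (i \<odot> FM S (P1 P mu D)) G"
  have gh: "g \<in> hom C (FO S (Pr P mu D)) (Pr P mu D)" unfolding g_def hom_def using ti tG by simp
  have key: "alg_hom C S mu i (Pr P mu D) g (Pair P (Idm C mu) h)"
    if h: "h \<in> hom C mu D" and eh: "h \<odot> i = G \<odot> FM S (Pair P (Idm C mu) h)" for h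
  proof -
    have th: "Arr C h" "Dom C h = mu" "Cod C h = D" using h unfolding hom_def by auto
    have "Pair P (Idm C mu) h \<odot> i = Pair P i (h \<odot> i)" using th ti by (simp add: Pair_comp)
    also have "\<dots> = Pair P (i \<odot> FM S (P1 P mu D) \<odot> FM S (Pair P (Idm C mu) h)) (G \<odot> FM S (Pair P (Idm C mu) h))"
      using th ti eh by (simp flip: FM_comp)
    also have "\<dots> = g \<odot> FM S (Pair P (Idm C mu) h)"
      unfolding g_def using th ti tG by (simp add: Pair_comp)
    finally show ?thesis unfolding alg_hom_def hom_def using th ti by simp
  qed
  have "\<exists>!h. alg_hom C S mu i (Pr P mu D) g h" using init gh unfolding initial_alg_def by blast
  hence "Pair P (Idm C mu) f = Pair P (Idm C mu) f'" using key[OF f ef] key[OF f' ef'] by blast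
  hence "P2 P mu D \<odot> Pair P (Idm C mu) f = P2 P mu D \<odot> Pair P (Idm C mu) f'" by simp
  thus ?thesis using f f' unfolding hom_def by simp
qed


lemma comp_ext: "g \<odot> f = k \<Longrightarrow> Arr C f \<Longrightarrow> Arr C g \<Longrightarrow> Arr C x \<Longrightarrow> Cod C f = Dom C g \<Longrightarrow> Cod C x = Dom C f
  \<Longrightarrow> g \<odot> (f \<odot> x) = k \<odot> x"
  by (simp flip: assoc)

lemma P1_Pair'[simp]: "Arr C f \<Longrightarrow> Arr C g \<Longrightarrow> Dom C f = Dom C g \<Longrightarrow> Cod C f = X \<Longrightarrow> Cod C g = Y \<Longrightarrow>
   Arr C x \<Longrightarrow> Cod C x = Dom C f \<Longrightarrow> P1 P X Y \<odot> (Pair P f g \<odot> x) = f \<odot> x"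
  by (simp flip: assoc)
lemma P2_Pair'[simp]: "Arr C f \<Longrightarrow> Arr C g \<Longrightarrow> Dom C f = Dom C g \<Longrightarrow> Cod C f = X \<Longrightarrow> Cod C g = Y \<Longrightarrow>
   Arr C x \<Longrightarrow> Cod C x = Dom C f \<Longrightarrow> P2 P X Y \<odot> (Pair P f g \<odot> x) = g \<odot> x"
  by (simp flip: assoc)
lemma Copair_In1'[simp]: "Arr C f \<Longrightarrow> Arr C g \<Longrightarrow> Cod C f = Cod C g \<Longrightarrow> Dom C f = X \<Longrightarrow> Dom C g = Y \<Longrightarrow>
   Arr C x \<Longrightarrow> Cod C x = X \<Longrightarrow> Copair Q f g \<odot> (In1 Q X Y \<odot> x) = f \<odot> x"
  by (simp flip: assoc)
lemma Copair_In2'[simp]: "Arr C f \<Longrightarrow> Arr C g \<Longrightarrow> Cod C f = Cod C g \<Longrightarrow> Dom C f = X \<Longrightarrow> Dom C g = Y \<Longrightarrow>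
   Arr C x \<Longrightarrow> Cod C x = Y \<Longrightarrow> Copair Q f g \<odot> (In2 Q X Y \<odot> x) = g \<odot> x"
  by (simp flip: assoc)

lemma freemap_FE[simp]: "Arr C f \<Longrightarrow> Dom C f = Y \<Longrightarrow> freemap C S F f \<odot> FE F Y = FE F (Cod C f) \<odot> f"
  using freemap(2) by blast
lemma freemap_FE'[simp]: "Arr C f \<Longrightarrow> Dom C f = Y \<Longrightarrow> Arr C x \<Longrightarrow> Cod C x = Y \<Longrightarrow>
   freemap C S F f \<odot> (FE F Y \<odot> x) = FE F (Cod C f) \<odot> (f \<odot> x)"
  using freemap(2)[of f] by (simp flip: assoc)
lemma hat_FE[simp]: "Arr C a \<Longrightarrow> Dom C a = FO S A \<Longrightarrow> Cod C a = A \<Longrightarrow> hat C S F a \<odot> FE F A = Idm C A"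
  using hat(2) by blast
lemma hat_FE'[simp]: "Arr C a \<Longrightarrow> Dom C a = FO S A \<Longrightarrow> Cod C a = A \<Longrightarrow> Arr C x \<Longrightarrow> Cod C x = A \<Longrightarrow>
   hat C S F a \<odot> (FE F A \<odot> x) = x"
  using hat(2)[of a] by (simp flip: assoc)

lemma BM_split1: "Arr C f \<Longrightarrow> Arr C g \<Longrightarrow> BM B f g = BM B (Idm C (Dom C f)) g \<odot> BM B f (Idm C (Dom C g))"
  using BM_comp[of f "Idm C (Dom C f)" "Idm C (Dom C g)" g] by simp
lemma BM_split2: "Arr C f \<Longrightarrow> Arr C g \<Longrightarrow> BM B f g = BM B f (Idm C (Cod C g)) \<odot> BM B (Idm C (Cod C f)) g"
  using BM_comp[of "Idm C (Cod C f)" f g "Idm C (Cod C g)"] by simp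
lemma BM_r: "Arr C g \<Longrightarrow> Arr C g' \<Longrightarrow> Cod C g = Dom C g' \<Longrightarrow>
   BM B (Idm C Z) (g' \<odot> g) = BM B (Idm C Z) g' \<odot> BM B (Idm C Z) g"
  using BM_comp[of "Idm C Z" "Idm C Z" g g'] by simp

lemma codiag_typ[simp]: "Arr C (codiag C Q Y)" "Dom C (codiag C Q Y) = Cp Q Y Y" "Cod C (codiag C Q Y) = Y"
  by (simp_all add: codiag_def)
lemma coprodm_typ[simp]: "Arr C f \<Longrightarrow> Arr C g \<Longrightarrow> Arr C (coprodm C Q f g)"
  "Arr C f \<Longrightarrow> Arr C g \<Longrightarrow> Dom C (coprodm C Q f g) = Cp Q (Dom C f) (Dom C g)"
  "Arr C f \<Longrightarrow> Arr C g \<Longrightarrow> Cod C (coprodm C Q f g) = Cp Q (Cod C f) (Cod C g)"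
  by (simp_all add: coprodm_def)
lemma prodm_typ[simp]: "Arr C f \<Longrightarrow> Arr C g \<Longrightarrow> Arr C (prodm C P f g)"
  "Arr C f \<Longrightarrow> Arr C g \<Longrightarrow> Dom C (prodm C P f g) = Pr P (Dom C f) (Dom C g)"
  "Arr C f \<Longrightarrow> Arr C g \<Longrightarrow> Cod C (prodm C P f g) = Pr P (Cod C f) (Cod C g)"
  by (simp_all add: prodm_def)
lemma FI_hom[simp]: "FI F Y \<in> hom C (FO S (FT F Y)) (FT F Y)" by (simp add: hom_def)

end

theorem theorem3p11:
  fixes C :: "('o,'m) cat" and S :: "('o,'m) endo" and B :: "('o,'m) bif"
    and P :: "('o,'m) prods" and Q :: "('o,'m) coprods" and F :: "('o,'m) freealg"
    and rho :: "'o \<Rightarrow> 'o \<Rightarrow> 'm" and mu :: 'o and i :: 'm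
    and nu :: "'o \<Rightarrow> 'o" and tau :: "'o \<Rightarrow> 'm" and gamma :: 'm
    and X :: 'o and a c sem beh :: 'm
  assumes "category C"
    and "endofunctor C S"
    and "bifunctor C B"
    and "binary_products C P"
    and "binary_coproducts C Q"
    and "initial_alg C S mu i"
    and "free_algs C S F"
    and "final_coalgs C B nu tau"
    and "ho_gsos_law C S B P Q F rho"
    and "op_model C S B P Q F rho mu i gamma"
    and "rho_bialgebra C S B P Q F rho X a c"
    and "alg_hom C S mu i X a sem"
    and "coalg_hom C B mu mu gamma (nu mu) (tau mu) beh"
  shows "\<exists>k \<in> hom C X (nu mu). Cmp C k sem = beh"
proof -
  interpret setting C S B P Q F using assms by unfold_locales
  note init = assms(6)
  have ti[simp]: "Arr C i" "Dom C i = FO S mu" "Cod C i = mu" using init unfolding initial_alg_def hom_def by auto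
  have ta[simp]: "Arr C a" "Dom C a = FO S X" "Cod C a = X" "Arr C c" "Dom C c = X" "Cod C c = BO B X X"
    using assms(11) unfolding rho_bialgebra_def hom_def by auto
  have tg[simp]: "Arr C gamma" "Dom C gamma = mu" "Cod C gamma = BO B mu mu"
    using assms(10) unfolding op_model_def rho_bialgebra_def hom_def by auto
  have ts[simp]: "Arr C sem" "Dom C sem = mu" "Cod C sem = X"
    using assms(12) unfolding alg_hom_def hom_def by auto
  have tb[simp]: "Arr C beh" "Dom C beh = mu" "Cod C beh = nu mu"
    using assms(13) unfolding coalg_hom_def hom_def by auto
  have tr[simp]: "Arr C (rho Y Z)" "Dom C (rho Y Z) = FO S (Pr P Y (BO B Y Z))"
     "Cod C (rho Y Z) = BO B Y (FT F (Cp Q Y Z))" for Y Z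
    using assms(9) unfolding ho_gsos_law_def hom_def by auto
  have ebi: "c \<odot> a = BM B (Idm C X) (hat C S F a \<odot> freemap C S F (codiag C Q X))
                   \<odot> rho X X \<odot> FM S (Pair P (Idm C X) c)"
    using assms(11) unfolding rho_bialgebra_def by auto
  have egam: "gamma \<odot> i = BM B (Idm C mu) (hat C S F i \<odot> freemap C S F (codiag C Q mu))
                   \<odot> rho mu mu \<odot> FM S (Pair P (Idm C mu) gamma)"
    using assms(10) unfolding op_model_def rho_bialgebra_def by auto
  have esem: "sem \<odot> i = a \<odot> FM S sem" using assms(12) unfolding alg_hom_def by auto
  have nat: "BM B (Idm C mu) (freemap C S F (coprodm C Q (Idm C mu) sem)) \<odot> rho mu mu
     = rho mu X \<odot> FM S (prodm C P (Idm C mu) (BM B (Idm C mu) sem))"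
    by (rule assms(9)[unfolded ho_gsos_law_def, THEN conjunct2, THEN conjunct2, rule_format,
          where g=sem and X=mu and Y=mu and Y'=X]) (simp add: hom_def)
  have din: "BM B (Idm C mu) (freemap C S F (coprodm C Q sem (Idm C X))) \<odot>
          (rho mu X \<odot> FM S (prodm C P (Idm C mu) (BM B sem (Idm C X))))
        = BM B sem (Idm C (FT F (Cp Q X X))) \<odot> (rho X X \<odot> FM S (prodm C P sem (Idm C (BO B X X))))"
    by (rule assms(9)[unfolded ho_gsos_law_def, THEN conjunct2, THEN conjunct1, rule_format,
          where f=sem and X=mu and X'=X and Y=X]) (simp add: hom_def)
  have E1: "hat C S F a \<odot> (freemap C S F (codiag C Q X) \<odot> freemap C S F (coprodm C Q sem (Idm C X)))
     = hat C S F a \<odot> freemap C S F (Copair Q sem (Idm C X))"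
  proof (rule free_uniq[where A=X and a=a and X="Cp Q mu X"])
    show ah: "a \<in> hom C (FO S X) X" by (simp add: hom_def)
    have am1: "alg_hom C S (FT F (Cp Q mu X)) (FI F (Cp Q mu X)) (FT F (Cp Q X X)) (FI F (Cp Q X X))
       (freemap C S F (coprodm C Q sem (Idm C X)))" using freemap(1)[of "coprodm C Q sem (Idm C X)"] by simp
    have am2: "alg_hom C S (FT F (Cp Q X X)) (FI F (Cp Q X X)) (FT F X) (FI F X)
       (freemap C S F (codiag C Q X))" using freemap(1)[of "codiag C Q X"] by simp
    have am3: "alg_hom C S (FT F (Cp Q mu X)) (FI F (Cp Q mu X)) (FT F X) (FI F X)
       (freemap C S F (Copair Q sem (Idm C X)))" using freemap(1)[of "Copair Q sem (Idm C X)"] by simp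
    have ahat: "alg_hom C S (FT F X) (FI F X) X a (hat C S F a)" using hat(1)[of a] by simp
    show "alg_hom C S (FT F (Cp Q mu X)) (FI F (Cp Q mu X)) X a
       (hat C S F a \<odot> (freemap C S F (codiag C Q X) \<odot> freemap C S F (coprodm C Q sem (Idm C X))))"
      by (rule alg_hom_comp[OF alg_hom_comp[OF am1 am2] ahat]) (simp_all add: ah)
    show "alg_hom C S (FT F (Cp Q mu X)) (FI F (Cp Q mu X)) X a
       (hat C S F a \<odot> freemap C S F (Copair Q sem (Idm C X)))"
      by (rule alg_hom_comp[OF am3 ahat]) (simp_all add: ah)
    have c1: "codiag C Q X \<odot> coprodm C Q sem (Idm C X) = Copair Q sem (Idm C X)"
      by (rule copair_ext[where X=mu and Y=X]) (simp_all add: codiag_def coprodm_def)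
    show "(hat C S F a \<odot> (freemap C S F (codiag C Q X) \<odot> freemap C S F (coprodm C Q sem (Idm C X)))) \<odot> FE F (Cp Q mu X)
       = (hat C S F a \<odot> freemap C S F (Copair Q sem (Idm C X))) \<odot> FE F (Cp Q mu X)"
      by (simp add: c1)
  qed
  have ah: "a \<in> hom C (FO S X) X" by (simp add: hom_def)
  have ahi: "i \<in> hom C (FO S mu) mu" by (simp add: hom_def)
  have ahat: "alg_hom C S (FT F X) (FI F X) X a (hat C S F a)" using hat(1)[of a] by simp
  have ahati: "alg_hom C S (FT F mu) (FI F mu) mu i (hat C S F i)" using hat(1)[of i] by simp
  have am3: "alg_hom C S (FT F (Cp Q mu X)) (FI F (Cp Q mu X)) (FT F X) (FI F X)
       (freemap C S F (Copair Q sem (Idm C X)))" using freemap(1)[of "Copair Q sem (Idm C X)"] by simp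
  have E2: "sem \<odot> (hat C S F i \<odot> freemap C S F (codiag C Q mu))
     = hat C S F a \<odot> (freemap C S F (Copair Q sem (Idm C X)) \<odot> freemap C S F (coprodm C Q (Idm C mu) sem))"
  proof (rule free_uniq[where A=X and a=a and X="Cp Q mu mu"])
    show "a \<in> hom C (FO S X) X" by (rule ah)
    have am1: "alg_hom C S (FT F (Cp Q mu mu)) (FI F (Cp Q mu mu)) (FT F (Cp Q mu X)) (FI F (Cp Q mu X))
       (freemap C S F (coprodm C Q (Idm C mu) sem))" using freemap(1)[of "coprodm C Q (Idm C mu) sem"] by simp
    have am2: "alg_hom C S (FT F (Cp Q mu mu)) (FI F (Cp Q mu mu)) (FT F mu) (FI F mu)
       (freemap C S F (codiag C Q mu))" using freemap(1)[of "codiag C Q mu"] by simp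
    show "alg_hom C S (FT F (Cp Q mu mu)) (FI F (Cp Q mu mu)) X a
       (sem \<odot> (hat C S F i \<odot> freemap C S F (codiag C Q mu)))"
      by (rule alg_hom_comp[OF alg_hom_comp[OF am2 ahati] assms(12)]) (simp_all add: ah ahi)
    show "alg_hom C S (FT F (Cp Q mu mu)) (FI F (Cp Q mu mu)) X a
       (hat C S F a \<odot> (freemap C S F (Copair Q sem (Idm C X)) \<odot> freemap C S F (coprodm C Q (Idm C mu) sem)))"
      by (rule alg_hom_comp[OF alg_hom_comp[OF am1 am3] ahat]) (simp_all add: ah)
    have c2: "sem \<odot> codiag C Q mu = Copair Q sem (Idm C X) \<odot> coprodm C Q (Idm C mu) sem"
      by (rule copair_ext[where X=mu and Y=mu]) (simp_all add: codiag_def coprodm_def)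
    show "(sem \<odot> (hat C S F i \<odot> freemap C S F (codiag C Q mu))) \<odot> FE F (Cp Q mu mu)
       = (hat C S F a \<odot> (freemap C S F (Copair Q sem (Idm C X)) \<odot> freemap C S F (coprodm C Q (Idm C mu) sem))) \<odot> FE F (Cp Q mu mu)"
      by (simp add: c2)
  qed
  let ?G = "BM B (Idm C mu) (hat C S F a \<odot> freemap C S F (Copair Q sem (Idm C X))) \<odot> rho mu X"
  let ?f2 = "BM B (Idm C mu) sem \<odot> gamma"
  let ?f1 = "BM B sem (Idm C X) \<odot> c \<odot> sem"
  have tG: "?G \<in> hom C (FO S (Pr P mu (BO B mu X))) (BO B mu X)" by (simp add: hom_def)
  have pp2: "prodm C P (Idm C mu) (BM B (Idm C mu) sem) \<odot> Pair P (Idm C mu) gamma = Pair P (Idm C mu) ?f2"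
    by (simp add: prodm_def Pair_comp)
  have eq2: "?f2 \<odot> i = ?G \<odot> FM S (Pair P (Idm C mu) ?f2)"
  proof -
    have "?f2 \<odot> i = BM B (Idm C mu) sem \<odot> (BM B (Idm C mu) (hat C S F i \<odot> freemap C S F (codiag C Q mu))
                   \<odot> rho mu mu \<odot> FM S (Pair P (Idm C mu) gamma))" by (simp add: egam)
    also have "\<dots> = BM B (Idm C mu) (sem \<odot> (hat C S F i \<odot> freemap C S F (codiag C Q mu)))
                   \<odot> rho mu mu \<odot> FM S (Pair P (Idm C mu) gamma)" by (simp add: BM_r)
    also have "\<dots> = BM B (Idm C mu) (hat C S F a \<odot> (freemap C S F (Copair Q sem (Idm C X)) \<odot> freemap C S F (coprodm C Q (Idm C mu) sem)))
                   \<odot> rho mu mu \<odot> FM S (Pair P (Idm C mu) gamma)" by (simp only: E2)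
    also have "\<dots> = BM B (Idm C mu) (hat C S F a \<odot> freemap C S F (Copair Q sem (Idm C X)))
                   \<odot> (BM B (Idm C mu) (freemap C S F (coprodm C Q (Idm C mu) sem)) \<odot> rho mu mu) \<odot> FM S (Pair P (Idm C mu) gamma)"
      by (simp add: BM_r)
    also have "\<dots> = BM B (Idm C mu) (hat C S F a \<odot> freemap C S F (Copair Q sem (Idm C X)))
                   \<odot> (rho mu X \<odot> FM S (prodm C P (Idm C mu) (BM B (Idm C mu) sem))) \<odot> FM S (Pair P (Idm C mu) gamma)"
      by (simp only: nat)
    also have "\<dots> = ?G \<odot> FM S (Pair P (Idm C mu) ?f2)"
      by (simp add: pp2[symmetric] FM_comp)
    finally show ?thesis .
  qed
  let ?H = "hat C S F a \<odot> freemap C S F (codiag C Q X)"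
  let ?cp = "freemap C S F (coprodm C Q sem (Idm C X))"
  let ?p1 = "prodm C P (Idm C mu) (BM B sem (Idm C X))"
  let ?p2 = "prodm C P sem (Idm C (BO B X X))"
  have ebi': "c \<odot> (a \<odot> x) = BM B (Idm C X) ?H \<odot> (rho X X \<odot> (FM S (Pair P (Idm C X) c) \<odot> x))"
    if "Arr C x" "Cod C x = FO S X" for x using comp_ext[OF ebi, of x] that by simp
  have bms: "BM B sem (Idm C X) \<odot> BM B (Idm C X) ?H = BM B (Idm C mu) ?H \<odot> BM B sem (Idm C (FT F (Cp Q X X)))"
    using BM_split1[of sem ?H] BM_split2[of sem ?H] by simp
  have bms': "BM B sem (Idm C X) \<odot> (BM B (Idm C X) ?H \<odot> x) = BM B (Idm C mu) ?H \<odot> (BM B sem (Idm C (FT F (Cp Q X X))) \<odot> x)"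
    if "Arr C x" "Cod C x = BO B X (FT F (Cp Q X X))" for x using comp_ext[OF bms, of x] that by simp
  have din': "BM B (Idm C mu) ?cp \<odot> (rho mu X \<odot> (FM S ?p1 \<odot> x)) = BM B sem (Idm C (FT F (Cp Q X X))) \<odot> (rho X X \<odot> (FM S ?p2 \<odot> x))"
    if "Arr C x" "Cod C x = FO S (Pr P mu (BO B X X))" for x
  proof -
    have "BM B (Idm C mu) ?cp \<odot> (rho mu X \<odot> (FM S ?p1 \<odot> x)) = (BM B (Idm C mu) ?cp \<odot> (rho mu X \<odot> FM S ?p1)) \<odot> x"
      using that by simp
    also have "\<dots> = (BM B sem (Idm C (FT F (Cp Q X X))) \<odot> (rho X X \<odot> FM S ?p2)) \<odot> x" by (simp only: din)
    also have "\<dots> = BM B sem (Idm C (FT F (Cp Q X X))) \<odot> (rho X X \<odot> (FM S ?p2 \<odot> x))" using that by simp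
    finally show ?thesis .
  qed
  have pc: "Pair P (Idm C X) c \<odot> sem = ?p2 \<odot> Pair P (Idm C mu) (c \<odot> sem)"
    by (simp add: prodm_def Pair_comp)
  have pp1: "?p1 \<odot> Pair P (Idm C mu) (c \<odot> sem) = Pair P (Idm C mu) ?f1"
    by (simp add: prodm_def Pair_comp)
  have eq1: "?f1 \<odot> i = ?G \<odot> FM S (Pair P (Idm C mu) ?f1)"
  proof -
    have "?f1 \<odot> i = BM B sem (Idm C X) \<odot> (BM B (Idm C X) ?H \<odot> (rho X X \<odot> FM S (Pair P (Idm C X) c \<odot> sem)))"
      by (simp add: esem ebi' FM_comp)
    also have "\<dots> = BM B sem (Idm C X) \<odot> (BM B (Idm C X) ?H \<odot> (rho X X \<odot> FM S (?p2 \<odot> Pair P (Idm C mu) (c \<odot> sem))))"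
      by (simp only: pc)
    also have "\<dots> = BM B (Idm C mu) ?H \<odot> (BM B (Idm C mu) ?cp \<odot> (rho mu X \<odot> (FM S ?p1 \<odot> FM S (Pair P (Idm C mu) (c \<odot> sem)))))"
      by (simp add: FM_comp bms' din')
    also have "\<dots> = BM B (Idm C mu) (hat C S F a \<odot> (freemap C S F (codiag C Q X) \<odot> ?cp)) \<odot> (rho mu X \<odot> FM S (?p1 \<odot> Pair P (Idm C mu) (c \<odot> sem)))"
      by (simp add: BM_r FM_comp)
    also have "\<dots> = ?G \<odot> FM S (Pair P (Idm C mu) ?f1)"
      by (simp add: E1 pp1)
    finally show ?thesis .
  qed
  have f12: "?f1 = ?f2"
    by (rule prim_rec_unique[OF init tG _ _ eq1 eq2]) (simp_all add: hom_def)
  have ttau: "Arr C (tau Y)" "Dom C (tau Y) = nu Y" "Cod C (tau Y) = BO B Y (nu Y)" for Y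
    using assms(8)[unfolded final_coalgs_def, THEN spec[of _ Y], THEN conjunct1] unfolding hom_def by auto
  have fc: "\<exists>!h. coalg_hom C B Y D d (nu Y) (tau Y) h" if "d \<in> hom C D (BO B Y D)" for Y D d
    by (rule assms(8)[unfolded final_coalgs_def, THEN spec[of _ Y], THEN conjunct2,
         THEN spec[of _ D], THEN spec[of _ d], THEN mp, OF that])
  have "\<exists>!h. coalg_hom C B mu X (BM B sem (Idm C X) \<odot> c) (nu mu) (tau mu) h"
    by (rule fc) (simp add: hom_def)
  then obtain k where k: "coalg_hom C B mu X (BM B sem (Idm C X) \<odot> c) (nu mu) (tau mu) k" by blast
  have tk[simp]: "Arr C k" "Dom C k = X" "Cod C k = nu mu" using k unfolding coalg_hom_def hom_def by auto
  have ek: "tau mu \<odot> k = BM B (Idm C mu) k \<odot> (BM B sem (Idm C X) \<odot> c)" using k unfolding coalg_hom_def by simp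
  have "tau mu \<odot> (k \<odot> sem) = BM B (Idm C mu) k \<odot> ?f1"
    using comp_ext[OF ek, of sem] ttau by simp
  also have "\<dots> = BM B (Idm C mu) k \<odot> ?f2" by (simp only: f12)
  also have "\<dots> = BM B (Idm C mu) (k \<odot> sem) \<odot> gamma" by (simp add: BM_r)
  finally have "coalg_hom C B mu mu gamma (nu mu) (tau mu) (k \<odot> sem)"
    unfolding coalg_hom_def hom_def by simp
  moreover have "\<exists>!h. coalg_hom C B mu mu gamma (nu mu) (tau mu) h"
    by (rule fc) (simp add: hom_def)
  ultimately have "k \<odot> sem = beh" using assms(13) by blast
  moreover have "k \<in> hom C X (nu mu)" unfolding hom_def by simp
  ultimately show ?thesis by blast
qed

end
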